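(* For every signed permutation $\pi\in\mathfrak{B}_n$, \[\mathfrak{d}_B(\pi)=2^{\operatorname{pe}_B(\pi)+\varsigma(\pi)}\sum_{\substack{D\subseteq\{0,1,\dots,n-1\}\\ \operatorname{Pe}_B(\pi)\subseteq D\,\triangle\,(D+1)\\ \pi(1)<0\ \Rightarrow\ 0\in D}}L_D,\] where $D+1=\{d+1:d\in D\}$ and $\triangle$ is symmetric difference.
   Context: $\mathfrak{B}_n$ is the group of signed permutations (bijections $\pi$ of $\{-n,\dots,n\}$ with $\pi(-i)=-\pi(i)$), written as words, with $\pi(0)=0$. $\operatorname{Pe}_B(\pi)$ is the set of $i\in\{1,\dots,n-1\}$ with $\pi(i-1)<\pi(i)>\pi(i+1)$, $\operatorname{pe}_B(\pi)=|\operatorname{Pe}_B(\pi)|$, and $\varsigma(\pi)$ is $0$ if $\pi(1)>0$ and $1$ if $\pi(1)<0$. Work in formal power series in commuting variables $z_0,z_1,\dots$. For $E=\{e_1<\dots<e_m\}\subseteq\{0,\dots,n-1\}$ put $e_{m+1}=n$ and $N_E=\sum_{0<i_1<\dots<i_m}z_0^{e_1}\prod_{r=1}^m z_{i_r}^{e_{r+1}-e_r}$ (so $N_\emptyset=z_0^n$), and $L_D=\sum_{D\subseteq T\subseteq\{0,\dots,n-1\}}N_T$. Let $Z$ be the totally ordered set $0<\bar1<1<\bar2<2<\cdots$, with $0$ and unbarred $j$ "plus-type" and barred $\bar j$ "minus-type", and $|0|=0$, $|\bar j|=|j|=j$. Define $\mathfrak{d}_B(\pi)=\sum\prod_{s=1}^n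 z_{|a_s|}$, summed over all sequences $(a_1,\dots,a_n)\in Z^n$ such that, with $a_0=0$, $a_0\le a_1\le\dots\le a_n$ and for each $s\in\{0,\dots,n-1\}$: if $\pi(s)<\pi(s+1)$ then $a_s<a_{s+1}$ or ($a_s=a_{s+1}$ is plus-type); if $\pi(s)>\pi(s+1)$ then $a_s<a_{s+1}$ or ($a_s=a_{s+1}$ is minus-type). *)

theory Defs
  imports Main "HOL-Library.Multiset"
begin

definition signed_perm :: "nat \<Rightarrow> (int \<Rightarrow> int) \<Rightarrow> bool" where
  "signed_perm n \<pi> \<longleftrightarrow> bij_betw \<pi> {- int n..int n} {- int n..int n} \<and> (\<forall>i. \<pi> (- i) = - \<pi> i)"

definition PeB :: "nat \<Rightarrow> (int \<Rightarrow> int) \<Rightarrow> nat set" where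
  "PeB n \<pi> = {i \<in> {1..n-1}. \<pi> (int i - 1) < \<pi> (int i) \<and> \<pi> (int i) > \<pi> (int i + 1)}"

definition peB :: "nat \<Rightarrow> (int \<Rightarrow> int) \<Rightarrow> nat" where
  "peB n \<pi> = card (PeB n \<pi>)"

definition varsigma :: "(int \<Rightarrow> int) \<Rightarrow> nat" where
  "varsigma \<pi> = (if \<pi> 1 < 0 then 1 else 0)"

(* Formal power series in commuting variables z_0, z_1, ... are represented by
   their coefficient functions: a monomial  prod_j z_j^(k_j)  is the multiset of
   variable indices in which j has multiplicity k_j. *)
type_synonym monomial = "nat multiset"

(* The totally ordered set Z = 0 < bar1 < 1 < bar2 < 2 < ... is encoded in nat
   order-preservingly: 0 |-> 0, bar j |-> 2j-1, j |-> 2j.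
   Plus-type elements (0 and unbarred j) are the even codes, minus-type (bar j) the odd ones;
   |a| is recovered as (a+1) div 2. *)
definition zabs :: "nat \<Rightarrow> nat" where "zabs a = (a + 1) div 2"
definition plus_type :: "nat \<Rightarrow> bool" where "plus_type a \<longleftrightarrow> even a"
definition minus_type :: "nat \<Rightarrow> bool" where "minus_type a \<longleftrightarrow> odd a"

(* admissible sequences (a_1,...,a_n) in Z^n for d_B(pi); the list a is (a_1..a_n), a_0 = 0 *)
definition dB_seqs :: "nat \<Rightarrow> (int \<Rightarrow> int) \<Rightarrow> nat list set" where
  "dB_seqs n \<pi> = {a. length a = n \<and>
     (let b = 0 # a in
      (\<forall>s<n. b ! s \<le> b ! (s+1)) \<and>
      (\<forall>s<n. \<pi> (int s) < \<pi> (int s + 1) \<longrightarrow>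
               (b ! s < b ! (s+1) \<or> (b ! s = b ! (s+1) \<and> plus_type (b ! s)))) \<and>
      (\<forall>s<n. \<pi> (int s) > \<pi> (int s + 1) \<longrightarrow>
               (b ! s < b ! (s+1) \<or> (b ! s = b ! (s+1) \<and> minus_type (b ! s)))))}"

definition dB_coef :: "nat \<Rightarrow> (int \<Rightarrow> int) \<Rightarrow> monomial \<Rightarrow> nat" where
  "dB_coef n \<pi> M = card {a \<in> dB_seqs n \<pi>. mset (map zabs a) = M}"

definition N_mono :: "nat \<Rightarrow> nat set \<Rightarrow> nat list \<Rightarrow> monomial" where
  "N_mono n E is = (let es = sorted_list_of_set E; ends = es @ [n] in
      replicate_mset (hd ends) 0 +
      (\<Sum>r<length es. replicate_mset (ends ! (r+1) - ends ! r) (is ! r)))"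

definition N_coef :: "nat \<Rightarrow> nat set \<Rightarrow> monomial \<Rightarrow> nat" where
  "N_coef n E M = card {is. length is = card E \<and> sorted_wrt (<) is \<and> (\<forall>i\<in>set is. 0 < i)
                          \<and> N_mono n E is = M}"

definition L_coef :: "nat \<Rightarrow> nat set \<Rightarrow> monomial \<Rightarrow> nat" where
  "L_coef n D M = (\<Sum>T \<in> {T. D \<subseteq> T \<and> T \<subseteq> {0..<n}}. N_coef n T M)"

definition symdiff :: "'a set \<Rightarrow> 'a set \<Rightarrow> 'a set" where
  "symdiff A B = (A - B) \<union> (B - A)"

end

theory Submission
  imports Defs
begin

definition tog :: "nat \<Rightarrow> nat set \<Rightarrow> nat set" where
  "tog e D = (if e \<in> D then D - {e} else insert e D)"

lemma tog_tog[simp]: "tog e (tog e D) = D"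
  unfolding tog_def by auto

lemma card_subsets: "finite T \<Longrightarrow> card {D. D \<subseteq> T} = 2 ^ card T"
  using card_Pow[of T] by (simp add: Pow_def)

lemma halving:
  assumes fin: "finite T" and eT: "e \<in> T"
    and Qi: "\<And>D. Q (tog e D) \<longleftrightarrow> Q D"
    and Rf: "\<And>D. R (tog e D) \<longleftrightarrow> \<not> R D"
  shows "2 * card {D. D \<subseteq> T \<and> Q D \<and> R D} = card {D. D \<subseteq> T \<and> Q D}"
proof -
  let ?A = "{D. D \<subseteq> T \<and> Q D \<and> R D}"
  let ?B = "{D. D \<subseteq> T \<and> Q D \<and> \<not> R D}"
  have finP: "finite {D. D \<subseteq> T}" using fin finite_Pow_iff[of T] unfolding Pow_def by blast
  have fA: "finite ?A" by (rule finite_subset[OF _ finP]) auto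
  have fB: "finite ?B" by (rule finite_subset[OF _ finP]) auto
  have sub: "\<And>D. D \<subseteq> T \<Longrightarrow> tog e D \<subseteq> T" using eT unfolding tog_def by auto
  have "tog e ` ?A = ?B"
  proof
    show "tog e ` ?A \<subseteq> ?B" using sub Qi Rf by auto
    show "?B \<subseteq> tog e ` ?A"
    proof
      fix D assume "D \<in> ?B"
      then have "tog e D \<in> ?A" using sub Qi Rf by auto
      then show "D \<in> tog e ` ?A" by (metis image_eqI tog_tog)
    qed
  qed
  moreover have "inj_on (tog e) ?A" by (metis inj_onI tog_tog)
  ultimately have cAB: "card ?B = card ?A" using card_image by fastforce
  have u: "{D. D \<subseteq> T \<and> Q D} = ?A \<union> ?B" by auto
  have "card (?A \<union> ?B) = card ?A + card ?B" by (rule card_Un_disjoint[OF fA fB]) auto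
  then have "card {D. D \<subseteq> T \<and> Q D} = card ?A + card ?B" unfolding u .
  then show ?thesis using cAB by simp
qed

lemma rhs_count:
  fixes P T :: "nat set" and z :: bool
  assumes finT: "finite T" and finP: "finite P"
    and P1: "\<forall>i\<in>P. 1 \<le> i" and Pna: "\<forall>i\<in>P. \<forall>j\<in>P. i \<noteq> Suc j"
    and z1: "z \<longrightarrow> 1 \<notin> P"
  shows "2 ^ (card P + (if z then 1 else 0)) *
      card {D. D \<subseteq> T \<and> (\<forall>i\<in>P. (i \<in> D) \<noteq> (i - 1 \<in> D)) \<and> (z \<longrightarrow> 0 \<in> D)}
    = (if (\<forall>i\<in>P. i - 1 \<in> T \<or> i \<in> T) \<and> (z \<longrightarrow> 0 \<in> T) then 2 ^ card T else 0)"
  using finP P1 Pna z1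
proof (induction P rule: finite_induct)
  case empty
  show ?case
  proof (cases z)
    case True
    show ?thesis
    proof (cases "0 \<in> T")
      case True
      have "2 * card {D. D \<subseteq> T \<and> True \<and> 0 \<in> D} = card {D. D \<subseteq> T \<and> True}"
        by (rule halving[OF finT True]) (auto simp: tog_def)
      then show ?thesis using \<open>z\<close> True finT by (simp add: card_subsets)
    next
      case False
      then have e: "{D. D \<subseteq> T \<and> (\<forall>i\<in>{}. (i \<in> D) \<noteq> (i - 1 \<in> D)) \<and> (z \<longrightarrow> 0 \<in> D)} = {}"
        using \<open>z\<close> by auto
      show ?thesis unfolding e using False \<open>z\<close> by simp
    qed
  next
    case False
    then show ?thesis using finT by (simp add: card_subsets)
  qed
next
  case (insert i P)
  let ?C = "\<lambda>P D. D \<subseteq> T \<and> (\<forall>i\<in>P. (i \<in> D) \<noteq> (i - 1 \<in> D)) \<and> (z \<longrightarrow> 0 \<in> D)"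
  have IH: "2 ^ (card P + (if z then 1 else 0)) * card {D. ?C P D}
    = (if (\<forall>i\<in>P. i - 1 \<in> T \<or> i \<in> T) \<and> (z \<longrightarrow> 0 \<in> T) then 2 ^ card T else 0)"
    using insert by auto
  have i1: "1 \<le> i" using insert by auto
  have iz: "z \<longrightarrow> i \<noteq> 1" using insert by auto
  have eq: "{D. ?C (insert i P) D} = {D. D \<subseteq> T \<and> ?C P D \<and> (i \<in> D) \<noteq> (i - 1 \<in> D)}" by auto
  show ?case
  proof (cases "i - 1 \<in> T \<or> i \<in> T")
    case True
    then obtain e where eT: "e \<in> T" and ei: "e = i - 1 \<or> e = i" by blast
    have enz: "z \<longrightarrow> e \<noteq> 0" using iz i1 ei by auto
    have enP: "\<forall>j\<in>P. e \<noteq> j \<and> e \<noteq> j - 1"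
    proof
      fix j assume j: "j \<in> P"
      have "i \<noteq> j" "i \<noteq> Suc j" "j \<noteq> Suc i" "1 \<le> j"
        using insert j by auto
      then show "e \<noteq> j \<and> e \<noteq> j - 1" using ei i1 by auto
    qed
    have h: "2 * card {D. D \<subseteq> T \<and> ?C P D \<and> (i \<in> D) \<noteq> (i - 1 \<in> D)} = card {D. D \<subseteq> T \<and> ?C P D}"
    proof (rule halving[OF finT eT])
      fix D
      show "?C P (tog e D) = ?C P D"
      proof -
        have a: "tog e D \<subseteq> T \<longleftrightarrow> D \<subseteq> T" using eT unfolding tog_def by auto
        have b: "\<forall>j\<in>P. (j \<in> tog e D \<longleftrightarrow> j \<in> D) \<and> (j - 1 \<in> tog e D \<longleftrightarrow> j - 1 \<in> D)"
          using enP unfolding tog_def by auto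
        have c: "z \<longrightarrow> (0 \<in> tog e D \<longleftrightarrow> 0 \<in> D)" using enz unfolding tog_def by auto
        show ?thesis using a b c by auto
      qed
      show "((i \<in> tog e D) \<noteq> (i - 1 \<in> tog e D)) = (\<not> ((i \<in> D) \<noteq> (i - 1 \<in> D)))"
        using ei i1 unfolding tog_def by auto
    qed
    have ci: "card (insert i P) = Suc (card P)" using insert by simp
    have Y: "{D. D \<subseteq> T \<and> ?C P D} = {D. ?C P D}" by auto
    have cond: "((\<forall>i\<in>insert i P. i - 1 \<in> T \<or> i \<in> T) \<and> (z \<longrightarrow> 0 \<in> T)) =
       ((\<forall>i\<in>P. i - 1 \<in> T \<or> i \<in> T) \<and> (z \<longrightarrow> 0 \<in> T))" using True by auto
    have "2 ^ (card (insert i P) + (if z then 1 else 0)) * card {D. ?C (insert i P) D}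
       = 2 ^ (card P + (if z then 1 else 0)) * (2 * card {D. D \<subseteq> T \<and> ?C P D \<and> (i \<in> D) \<noteq> (i - 1 \<in> D)})"
      unfolding ci eq by (simp add: power_add)
    also have "\<dots> = 2 ^ (card P + (if z then 1 else 0)) * card {D. ?C P D}"
      unfolding h Y ..
    finally show ?thesis unfolding IH cond .
  next
    case False
    then have e: "{D. ?C (insert i P) D} = {}" by auto
    show ?thesis unfolding e using False by simp
  qed
qed

definition nmL :: "nat list \<Rightarrow> nat \<Rightarrow> nat list \<Rightarrow> nat multiset" where
  "nmL es n is = replicate_mset (hd (es @ [n])) 0 +
      (\<Sum>r<length es. replicate_mset ((es @ [n]) ! (r+1) - (es @ [n]) ! r) (is ! r))"

definition gL :: "nat list \<Rightarrow> nat list \<Rightarrow> nat \<Rightarrow> nat" where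
  "gL es is p = (if length (filter (\<lambda>e. e < p) es) = 0 then 0
                 else is ! (length (filter (\<lambda>e. e < p) es) - 1))"

lemma nmL_snoc:
  "nmL (es @ [e]) n is = nmL es e is + replicate_mset (n - e) (is ! length es)"
proof -
  have hd: "hd ((es @ [e]) @ [n]) = hd (es @ [e])" by (cases es) auto
  have s: "(\<Sum>r<length es. replicate_mset (((es @ [e]) @ [n]) ! (r+1) - ((es @ [e]) @ [n]) ! r) (is ! r))
         = (\<Sum>r<length es. replicate_mset ((es @ [e]) ! (r+1) - (es @ [e]) ! r) (is ! r))"
  proof (rule sum.cong[OF refl])
    fix r assume "r \<in> {..<length es}"
    then have "r + 1 < length (es @ [e])" "r < length (es @ [e])" by auto
    then show "replicate_mset (((es @ [e]) @ [n]) ! (r+1) - ((es @ [e]) @ [n]) ! r) (is ! r)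
         = replicate_mset ((es @ [e]) ! (r+1) - (es @ [e]) ! r) (is ! r)"
      by (simp only: nth_append_left)
  qed
  have l: "((es @ [e]) @ [n]) ! (length es + 1) = n" "((es @ [e]) @ [n]) ! (length es) = e"
    by (simp_all add: nth_append)
  show ?thesis
    unfolding nmL_def length_append_singleton sum.lessThan_Suc hd s
    using l by (simp add: add.assoc)
qed

lemma mset_map_const: "(\<And>x. x \<in> set xs \<Longrightarrow> f x = c) \<Longrightarrow> mset (map f xs) = replicate_mset (length xs) c"
  by (induction xs) auto

lemma nmL_expand:
  assumes "sorted_wrt (<) es" "\<forall>e\<in>set es. e < n"
  shows "nmL es n is = mset (map (gL es is) [1..<Suc n])"
  using assms
proof (induction es arbitrary: n rule: rev_induct)
  case Nil
  have "mset (map (gL [] is) [1..<Suc n]) = replicate_mset n 0"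
    by (subst mset_map_const[of _ _ 0]) (auto simp: gL_def)
  then show ?case by (simp add: nmL_def)
next
  case (snoc e es)
  have en: "e < n" using snoc.prems by auto
  have les: "\<forall>x\<in>set es. x < e" using snoc.prems(1) by (simp add: sorted_wrt_append)
  have IH: "nmL es e is = mset (map (gL es is) [1..<Suc e])"
    using snoc.IH snoc.prems les by (simp add: sorted_wrt_append)
  have split: "[1..<Suc n] = [1..<Suc e] @ [Suc e..<Suc n]"
    using upt_add_eq_append[of 1 "Suc e" "n - e"] en by simp
  have p1: "map (gL (es @ [e]) is) [1..<Suc e] = map (gL es is) [1..<Suc e]"
  proof (rule map_cong[OF refl])
    fix p assume "p \<in> set [1..<Suc e]"
    then have "p \<le> e" by auto
    then have "filter (\<lambda>x. x < p) (es @ [e]) = filter (\<lambda>x. x < p) es" by auto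
    then show "gL (es @ [e]) is p = gL es is p" unfolding gL_def by simp
  qed
  have p2: "mset (map (gL (es @ [e]) is) [Suc e..<Suc n]) = replicate_mset (n - e) (is ! length es)"
  proof (subst mset_map_const[of _ _ "is ! length es"])
    fix p assume "p \<in> set [Suc e..<Suc n]"
    then have "e < p" by auto
    then have "filter (\<lambda>x. x < p) (es @ [e]) = es @ [e]" using les by (auto simp: filter_id_conv)
    then show "gL (es @ [e]) is p = is ! length es" unfolding gL_def by simp
  qed (use en in \<open>simp add: Suc_diff_Suc\<close>)
  show ?case unfolding nmL_snoc IH split map_append mset_append p1 p2 ..
qed


definition jT :: "nat set \<Rightarrow> nat \<Rightarrow> nat" where
  "jT T p = card {e\<in>T. e < p}"

definition gT :: "nat set \<Rightarrow> nat list \<Rightarrow> nat \<Rightarrow> nat" where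
  "gT T is p = (if jT T p = 0 then 0 else is ! (jT T p - 1))"

definition Tset :: "nat \<Rightarrow> nat list \<Rightarrow> nat set" where
  "Tset n c = {s. s < n \<and> (0 # c) ! s < (0 # c) ! Suc s}"

lemma gL_gT: "finite T \<Longrightarrow> gL (sorted_list_of_set T) is = gT T is"
proof
  fix p assume fT: "finite T"
  have "length (filter (\<lambda>e. e < p) (sorted_list_of_set T)) = jT T p"
    using fT by (subst distinct_length_filter) (auto simp: jT_def Int_def intro!: arg_cong[where f=card])
  then show "gL (sorted_list_of_set T) is p = gT T is p" unfolding gL_def gT_def by simp
qed

lemma N_mono_expand:
  assumes "finite T" "T \<subseteq> {0..<n}"
  shows "N_mono n T is = mset (map (gT T is) [1..<Suc n])"
proof -
  have "N_mono n T is = nmL (sorted_list_of_set T) n is"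
    unfolding N_mono_def nmL_def Let_def ..
  also have "\<dots> = mset (map (gL (sorted_list_of_set T) is) [1..<Suc n])"
    using assms by (intro nmL_expand) auto
  finally show ?thesis using gL_gT[OF assms(1)] by simp
qed

lemma jT_0[simp]: "jT T 0 = 0" unfolding jT_def by simp

lemma jT_Suc: "finite T \<Longrightarrow> jT T (Suc p) = jT T p + (if p \<in> T then 1 else 0)"
proof -
  assume fT: "finite T"
  show ?thesis
  proof (cases "p \<in> T")
    case True
    have "{e\<in>T. e < Suc p} = insert p {e\<in>T. e < p}" using True by auto
    then show ?thesis using True fT unfolding jT_def by simp
  next
    case False
    have "{e\<in>T. e < Suc p} = {e\<in>T. e < p}" using False less_Suc_eq by auto
    then show ?thesis using False unfolding jT_def by simp
  qed
qed

lemma jT_mono: "p \<le> q \<Longrightarrow> finite T \<Longrightarrow> jT T p \<le> jT T q"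
  unfolding jT_def by (rule card_mono) auto

lemma jT_le: "finite T \<Longrightarrow> jT T p \<le> card T"
  unfolding jT_def by (rule card_mono) auto

lemma jT_nth:
  assumes fT: "finite T" and r: "r < card T"
  shows "jT T (sorted_list_of_set T ! r) = r"
proof -
  let ?es = "sorted_list_of_set T"
  have ss: "sorted_wrt (<) ?es" by simp
  have len: "length ?es = card T" by simp
  have dis: "distinct ?es" by simp
  have setes: "set ?es = T" using fT by simp
  have "{e\<in>T. e < ?es ! r} = (\<lambda>i. ?es ! i) ` {..<r}"
  proof
    show "{e\<in>T. e < ?es ! r} \<subseteq> (\<lambda>i. ?es ! i) ` {..<r}"
    proof
      fix e assume e: "e \<in> {e\<in>T. e < ?es ! r}"
      then obtain i where i: "i < length ?es" "e = ?es ! i" using setes by (metis (no_types, lifting) in_set_conv_nth mem_Collect_eq)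
      have "i < r"
      proof (rule ccontr)
        assume "\<not> i < r"
        then have "r \<le> i" by simp
        then have "?es ! r \<le> ?es ! i"
          using ss i(1) by (metis le_eq_less_or_eq sorted_wrt_nth_less)
        then show False using e i by simp
      qed
      then show "e \<in> (\<lambda>i. ?es ! i) ` {..<r}" using i by auto
    qed
    show "(\<lambda>i. ?es ! i) ` {..<r} \<subseteq> {e\<in>T. e < ?es ! r}"
    proof
      fix e assume "e \<in> (\<lambda>i. ?es ! i) ` {..<r}"
      then obtain i where i: "i < r" "e = ?es ! i" by auto
      have "?es ! i < ?es ! r" using sorted_wrt_nth_less[OF ss i(1)] r len by simp
      moreover have "?es ! i \<in> T" using i r len setes by (metis nth_mem order.strict_trans)
      ultimately show "e \<in> {e\<in>T. e < ?es ! r}" using i by simp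
    qed
  qed
  moreover have "inj_on (\<lambda>i. ?es ! i) {..<r}"
    using dis r len by (auto simp: inj_on_def nth_eq_iff_index_eq)
  ultimately show ?thesis unfolding jT_def by (simp add: card_image)
qed

lemma nth_jT:
  assumes fT: "finite T" and x: "x \<in> T"
  shows "sorted_list_of_set T ! (jT T x) = x" "jT T x < card T"
proof -
  obtain i where i: "i < card T" "sorted_list_of_set T ! i = x"
    using x fT by (metis in_set_conv_nth length_sorted_list_of_set set_sorted_list_of_set)
  then show "sorted_list_of_set T ! (jT T x) = x" "jT T x < card T" using jT_nth[OF fT i(1)] by auto
qed


definition valid_is :: "nat set \<Rightarrow> nat list \<Rightarrow> bool" where
  "valid_is T is \<longleftrightarrow> length is = card T \<and> sorted_wrt (<) is \<and> (\<forall>i\<in>set is. 0 < i)"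

lemma gT_Suc_in:
  assumes fT: "finite T" and p: "p \<in> T" and v: "valid_is T is"
  shows "gT T is (Suc p) = is ! (jT T p)" "gT T is p < gT T is (Suc p)"
proof -
  have js: "jT T (Suc p) = Suc (jT T p)" using jT_Suc[OF fT, of p] p by simp
  have jl: "jT T p < length is" using nth_jT(2)[OF fT] v jT_mono[OF _ fT, of p] js jT_le[OF fT, of "Suc p"]
    unfolding valid_is_def by simp
  show g: "gT T is (Suc p) = is ! (jT T p)" unfolding gT_def js by simp
  have pos: "0 < is ! (jT T p)" using v jl unfolding valid_is_def by auto
  show "gT T is p < gT T is (Suc p)"
  proof (cases "jT T p = 0")
    case True
    then show ?thesis unfolding g using pos by (simp add: gT_def)
  next
    case False
    have "is ! (jT T p - 1) < is ! (jT T p)"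
      using v jl False sorted_wrt_nth_less[of "(<)" "is" "jT T p - 1" "jT T p"] unfolding valid_is_def by simp
    then show ?thesis unfolding g using False by (simp add: gT_def)
  qed
qed

lemma gT_Suc_notin: "finite T \<Longrightarrow> p \<notin> T \<Longrightarrow> gT T is (Suc p) = gT T is p"
  unfolding gT_def using jT_Suc[of T p] by simp

lemma gT_mono:
  assumes fT: "finite T" and v: "valid_is T is" and pq: "p \<le> q"
  shows "gT T is p \<le> gT T is q"
proof -
  have j: "jT T p \<le> jT T q" "jT T q \<le> length is"
    using jT_mono[OF pq fT] jT_le[OF fT] v unfolding valid_is_def by auto
  have so: "sorted is" using v unfolding valid_is_def by (metis sorted_wrt_mono_rel less_imp_le)
  show ?thesis
  proof (cases "jT T p = 0")
    case True then show ?thesis by (simp add: gT_def)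
  next
    case False
    then have "is ! (jT T p - 1) \<le> is ! (jT T q - 1)" using j so by (intro sorted_nth_mono) auto
    then show ?thesis using False j by (simp add: gT_def)
  qed
qed

lemma map_upt_nth: "i < n \<Longrightarrow> map f [1..<Suc n] ! i = f (Suc i)"
  by (subst nth_map) (simp_all del: upt_Suc)

lemma expand_nth0:
  assumes "s \<le> n"
  shows "(0 # map (gT T is) [1..<Suc n]) ! s = gT T is s"
proof (cases s)
  case 0 then show ?thesis by (simp add: gT_def)
next
  case (Suc s') then show ?thesis using assms map_upt_nth[of s' n "gT T is"] by simp
qed

lemma expand_sorted:
  assumes fT: "finite T" and v: "valid_is T is"
  shows "sorted (map (gT T is) [1..<Suc n])"
  unfolding sorted_iff_nth_mono using gT_mono[OF fT v] by (simp del: upt_Suc add: map_upt_nth)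

lemma expand_Tset:
  assumes fT: "finite T" and Tn: "T \<subseteq> {0..<n}" and v: "valid_is T is"
  shows "Tset n (map (gT T is) [1..<Suc n]) = T"
proof -
  have "\<And>s. s < n \<Longrightarrow> (gT T is s < gT T is (Suc s)) = (s \<in> T)"
    using gT_Suc_in(2)[OF fT _ v] gT_Suc_notin[OF fT] by (metis less_irrefl)
  moreover have "\<And>s. s < n \<Longrightarrow> (0 # map (gT T is) [1..<Suc n]) ! s = gT T is s"
    "\<And>s. s < n \<Longrightarrow> (0 # map (gT T is) [1..<Suc n]) ! Suc s = gT T is (Suc s)"
    using expand_nth0[of _ n T "is"] map_upt_nth[of _ n "gT T is"] by (simp_all del: upt_Suc)
  ultimately show ?thesis unfolding Tset_def using Tn by (auto simp del: upt_Suc nth_Cons_Suc)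
qed

lemma expand_inj:
  assumes fT: "finite T" and Tn: "T \<subseteq> {0..<n}" and v: "valid_is T is"
  shows "is = map (\<lambda>r. (map (gT T is) [1..<Suc n]) ! (sorted_list_of_set T ! r)) [0..<card T]"
proof (rule nth_equalityI)
  show "length is = length (map (\<lambda>r. (map (gT T is) [1..<Suc n]) ! (sorted_list_of_set T ! r)) [0..<card T])"
    using v unfolding valid_is_def by simp
  fix r assume "r < length is"
  then have r: "r < card T" using v unfolding valid_is_def by simp
  let ?e = "sorted_list_of_set T ! r"
  have eT: "?e \<in> T" using r fT by (metis nth_mem length_sorted_list_of_set set_sorted_list_of_set)
  then have en: "?e < n" using Tn by auto
  have "(map (gT T is) [1..<Suc n]) ! ?e = gT T is (Suc ?e)" using en by (rule map_upt_nth)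
  also have "\<dots> = is ! r" using gT_Suc_in(1)[OF fT eT v] jT_nth[OF fT r] by simp
  finally show "is ! r = map (\<lambda>r. (map (gT T is) [1..<Suc n]) ! (sorted_list_of_set T ! r)) [0..<card T] ! r"
    using r by simp
qed


lemma expand_surj:
  assumes fT: "finite T" and Tn: "T \<subseteq> {0..<n}" and sc: "sorted c" and lc: "length c = n"
    and Tc: "Tset n c = T"
  defines "is0 \<equiv> map (\<lambda>r. c ! (sorted_list_of_set T ! r)) [0..<card T]"
  shows "valid_is T is0" "map (gT T is0) [1..<Suc n] = c"
proof -
  let ?es = "sorted_list_of_set T"
  let ?cc = "0 # c"
  have scc: "sorted ?cc" using sc by simp
  have lcc: "length ?cc = Suc n" using lc by simp
  have ccmono: "\<And>i j. i \<le> j \<Longrightarrow> j \<le> n \<Longrightarrow> ?cc ! i \<le> ?cc ! j"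
    using sorted_nth_mono[OF scc] lcc by simp
  have inT: "\<And>s. s < n \<Longrightarrow> s \<in> T \<longleftrightarrow> ?cc ! s < ?cc ! Suc s"
    using Tc unfolding Tset_def by blast
  have esT: "\<And>r. r < card T \<Longrightarrow> ?es ! r \<in> T"
    using fT by (metis nth_mem length_sorted_list_of_set set_sorted_list_of_set)
  have esn: "\<And>r. r < card T \<Longrightarrow> ?es ! r < n"
  proof -
    fix r assume "r < card T"
    then have "?es ! r \<in> T" by (rule esT)
    then show "?es ! r < n" using Tn by auto
  qed
  have is0r: "\<And>r. r < card T \<Longrightarrow> is0 ! r = ?cc ! Suc (?es ! r)"
    unfolding is0_def by simp
  have len0: "length is0 = card T" unfolding is0_def by simp
  have pos: "\<forall>i\<in>set is0. 0 < i"
  proof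
    fix x assume "x \<in> set is0"
    then obtain r where r: "r < card T" "x = is0 ! r" using len0 by (metis in_set_conv_nth)
    have "?cc ! (?es ! r) < ?cc ! Suc (?es ! r)" using inT esT esn r by blast
    then show "0 < x" using r is0r by simp
  qed
  have srt: "sorted_wrt (<) is0"
    unfolding sorted_wrt_iff_nth_less
  proof (intro allI impI)
    fix i j assume ij: "i < j" "j < length is0"
    then have i: "i < card T" and j: "j < card T" using len0 by auto
    have "?es ! i < ?es ! j" using sorted_wrt_nth_less[of "(<)" ?es i j] ij j by simp
    then have "?cc ! Suc (?es ! i) \<le> ?cc ! (?es ! j)" using ccmono[of "Suc (?es ! i)" "?es ! j"] esn[OF j] by (simp del: nth_Cons_Suc)
    also have "\<dots> < ?cc ! Suc (?es ! j)" using inT esT esn j by blast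
    finally show "is0 ! i < is0 ! j" using is0r i j by simp
  qed
  show v: "valid_is T is0" unfolding valid_is_def using len0 pos srt by simp
  have key: "\<And>p. p \<le> n \<Longrightarrow> ?cc ! p = gT T is0 p"
  proof -
    fix p show "p \<le> n \<Longrightarrow> ?cc ! p = gT T is0 p"
    proof (induction p)
      case 0 then show ?case by (simp add: gT_def)
    next
      case (Suc p)
      then have pn: "p < n" by simp
      have IH: "?cc ! p = gT T is0 p" using Suc by simp
      show ?case
      proof (cases "p \<in> T")
        case True
        have "gT T is0 (Suc p) = is0 ! (jT T p)" using gT_Suc_in(1)[OF fT True v] .
        also have "\<dots> = ?cc ! Suc (?es ! (jT T p))" using is0r nth_jT(2)[OF fT True] by simp
        also have "\<dots> = ?cc ! Suc p" using nth_jT(1)[OF fT True] by simp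
        finally show ?thesis by simp
      next
        case False
        have "\<not> ?cc ! p < ?cc ! Suc p" using inT pn False by blast
        moreover have "?cc ! p \<le> ?cc ! Suc p" using ccmono[of p "Suc p"] pn by (simp del: nth_Cons_Suc)
        ultimately have "?cc ! Suc p = ?cc ! p" by simp
        then show ?thesis using IH gT_Suc_notin[OF fT False] by simp
      qed
    qed
  qed
  show "map (gT T is0) [1..<Suc n] = c"
  proof (rule nth_equalityI)
    show "length (map (gT T is0) [1..<Suc n]) = length c" using lc by simp
    fix i assume "i < length (map (gT T is0) [1..<Suc n])"
    then have i: "i < n" by (simp del: upt_Suc)
    have "map (gT T is0) [1..<Suc n] ! i = gT T is0 (Suc i)" using i by (rule map_upt_nth)
    also have "\<dots> = ?cc ! Suc i" using key[of "Suc i"] i by (simp del: nth_Cons_Suc)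
    finally show "map (gT T is0) [1..<Suc n] ! i = c ! i" by simp
  qed
qed

lemma sorted_mset_eq: "sorted xs \<Longrightarrow> sorted ys \<Longrightarrow> mset xs = mset ys \<Longrightarrow> xs = ys"
  by (metis properties_for_sort)

lemma N_coef_eq:
  assumes Tn: "T \<subseteq> {0..<n}" and sc: "sorted c" and lc: "length c = n"
  shows "N_coef n T (mset c) = (if T = Tset n c then 1 else 0)"
proof -
  have fT: "finite T" using Tn finite_subset by blast
  have S: "{is. length is = card T \<and> sorted_wrt (<) is \<and> (\<forall>i\<in>set is. 0 < i) \<and> N_mono n T is = mset c}
      = {is. valid_is T is \<and> map (gT T is) [1..<Suc n] = c}" (is "?S = ?S'")
  proof -
    have "\<And>is. valid_is T is \<Longrightarrow> (N_mono n T is = mset c) = (map (gT T is) [1..<Suc n] = c)"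
    proof -
      fix "is" assume v: "valid_is T is"
      have "N_mono n T is = mset (map (gT T is) [1..<Suc n])" using N_mono_expand[OF fT Tn] .
      then show "(N_mono n T is = mset c) = (map (gT T is) [1..<Suc n] = c)"
        using sorted_mset_eq[OF expand_sorted[OF fT v, of n] sc] by auto
    qed
    then show ?thesis unfolding valid_is_def by blast
  qed
  show ?thesis
  proof (cases "T = Tset n c")
    case True
    define is0 where "is0 = map (\<lambda>r. c ! (sorted_list_of_set T ! r)) [0..<card T]"
    have v0: "valid_is T is0" and e0: "map (gT T is0) [1..<Suc n] = c"
      using expand_surj[OF fT Tn sc lc True[symmetric]] unfolding is0_def by auto
    have "?S' = {is0}"
    proof
      show "?S' \<subseteq> {is0}"
      proof
        fix "is" assume "is \<in> ?S'"
        then have v: "valid_is T is" and e: "map (gT T is) [1..<Suc n] = c" by auto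
        show "is \<in> {is0}"
          using expand_inj[OF fT Tn v] expand_inj[OF fT Tn v0] e e0 by simp
      qed
      show "{is0} \<subseteq> ?S'" using v0 e0 by simp
    qed
    then show ?thesis unfolding N_coef_def S using True by simp
  next
    case False
    have e: "?S' = {}"
    proof (rule ccontr)
      assume "?S' \<noteq> {}"
      then obtain "is" where v: "valid_is T is" and e: "map (gT T is) [1..<Suc n] = c" by auto
      then show False using expand_Tset[OF fT Tn v] False by simp
    qed
    show ?thesis unfolding N_coef_def S e using False by simp
  qed
qed

lemma N_coef_size:
  assumes Tn: "T \<subseteq> {0..<n}" and sM: "size M \<noteq> n"
  shows "N_coef n T M = 0"
proof -
  have fT: "finite T" using Tn finite_subset by blast
  have e: "{is. length is = card T \<and> sorted_wrt (<) is \<and> (\<forall>i\<in>set is. 0 < i) \<and> N_mono n T is = M} = {}"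
    using N_mono_expand[OF fT Tn] sM by (auto simp del: upt_Suc)
  show ?thesis unfolding N_coef_def e by simp
qed

definition PcL :: "(nat \<Rightarrow> bool) \<Rightarrow> nat \<Rightarrow> nat \<Rightarrow> bool" where
  "PcL \<alpha> L r \<longleftrightarrow> (\<forall>j. Suc j < r \<longrightarrow> \<not> \<alpha> j) \<and> (\<forall>j. r \<le> j \<longrightarrow> Suc j < L \<longrightarrow> \<alpha> j)"

definition WL :: "(nat \<Rightarrow> bool) \<Rightarrow> nat \<Rightarrow> bool" where
  "WL \<alpha> L \<longleftrightarrow> (\<forall>i. 0 < i \<longrightarrow> Suc i < L \<longrightarrow> \<not> (\<alpha> (i - 1) \<and> \<not> \<alpha> i))"

lemma cut_count:
  assumes L: "1 \<le> L"
  shows "card {r. r \<le> L \<and> PcL \<alpha> L r} = (if WL \<alpha> L then 2 else 0)"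
proof (cases "WL \<alpha> L")
  case W: True
  define m where "m = (if \<exists>j. Suc j < L \<and> \<alpha> j then (LEAST j. Suc j < L \<and> \<alpha> j) else L - 1)"
  have mL: "m < L"
  proof (cases "\<exists>j. Suc j < L \<and> \<alpha> j")
    case True
    then have "m = (LEAST j. Suc j < L \<and> \<alpha> j)" unfolding m_def by simp
    then have "Suc m < L \<and> \<alpha> m" using LeastI_ex[OF True] by simp
    then show ?thesis by simp
  next
    case False
    have "m = L - 1" unfolding m_def by (rule if_not_P[OF False])
    then show ?thesis using L by simp
  qed
  have A: "\<And>j. Suc j < L \<Longrightarrow> \<alpha> j \<longleftrightarrow> m \<le> j"
  proof -
    fix j assume jL: "Suc j < L"
    show "\<alpha> j \<longleftrightarrow> m \<le> j"
    proof (cases "\<exists>j. Suc j < L \<and> \<alpha> j")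
      case ex: True
      then have mdef: "m = (LEAST j. Suc j < L \<and> \<alpha> j)" unfolding m_def by simp
      have am: "\<alpha> m" "Suc m < L" using LeastI_ex[OF ex] unfolding mdef by simp_all
      show ?thesis
      proof
        assume "\<alpha> j" then show "m \<le> j" unfolding mdef using jL by (simp add: Least_le)
      next
        assume "m \<le> j"
        then show "\<alpha> j" using jL
        proof (induction j rule: dec_induct)
          case base then show ?case using am by simp
        next
          case (step j)
          have "\<alpha> j" using step by simp
          moreover have "\<not> (\<alpha> (Suc j - 1) \<and> \<not> \<alpha> (Suc j))" using W step.prems unfolding WL_def by blast
          ultimately show ?case by simp
        qed
      qed
    next
      case False
      have "m = L - 1" unfolding m_def by (rule if_not_P[OF False])
      then show ?thesis using False jL by auto
    qed
  qed
  have "{r. r \<le> L \<and> PcL \<alpha> L r} = {m, Suc m}"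
  proof (intro set_eqI iffI)
    fix r assume "r \<in> {r. r \<le> L \<and> PcL \<alpha> L r}"
    then have rL: "r \<le> L" and P1: "\<And>j. Suc j < r \<Longrightarrow> \<not> \<alpha> j" and P2: "\<And>j. r \<le> j \<Longrightarrow> Suc j < L \<Longrightarrow> \<alpha> j"
      unfolding PcL_def by auto
    have "r \<le> Suc m"
    proof (rule ccontr)
      assume "\<not> r \<le> Suc m"
      then have "Suc m < r" by simp
      then have "\<not> \<alpha> m" "Suc m < L" using P1 rL by auto
      then show False using A by simp
    qed
    moreover have "m \<le> r"
    proof (rule ccontr)
      assume "\<not> m \<le> r"
      then have "r < m" by simp
      then have "\<alpha> r" "Suc r < L" using P2 mL by auto
      then show False using A \<open>r < m\<close> by simp
    qed
    ultimately show "r \<in> {m, Suc m}" by auto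
  next
    fix r assume r: "r \<in> {m, Suc m}"
    then have rL: "r \<le> L" using mL by auto
    have "\<forall>j. Suc j < r \<longrightarrow> \<not> \<alpha> j"
    proof (intro allI impI)
      fix j assume "Suc j < r"
      then have "j < m" "Suc j < L" using r rL by auto
      then show "\<not> \<alpha> j" using A by simp
    qed
    moreover have "\<forall>j. r \<le> j \<longrightarrow> Suc j < L \<longrightarrow> \<alpha> j"
    proof (intro allI impI)
      fix j assume "r \<le> j" "Suc j < L"
      then show "\<alpha> j" using A r by auto
    qed
    ultimately show "r \<in> {r. r \<le> L \<and> PcL \<alpha> L r}" using rL unfolding PcL_def by simp
  qed
  then show ?thesis using W by simp
next
  case nW: False
  then obtain i where i: "0 < i" "Suc i < L" "\<alpha> (i - 1)" "\<not> \<alpha> i" unfolding WL_def by blast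
  have "{r. r \<le> L \<and> PcL \<alpha> L r} = {}"
  proof (rule ccontr)
    assume "{r. r \<le> L \<and> PcL \<alpha> L r} \<noteq> {}"
    then obtain r where P1: "\<And>j. Suc j < r \<Longrightarrow> \<not> \<alpha> j" and P2: "\<And>j. r \<le> j \<Longrightarrow> Suc j < L \<Longrightarrow> \<alpha> j"
      unfolding PcL_def by auto
    show False
    proof (cases "i < r")
      case True
      then have "Suc (i - 1) < r" using i by simp
      then show False using P1 i by blast
    next
      case False
      then show False using P2[of i] i by simp
    qed
  qed
  then show ?thesis using nW by simp
qed

lemma two_val_form:
  assumes "p \<noteq> q" "\<forall>x\<in>set t. x = p \<or> x = q"
    "\<forall>j. Suc j < length t \<longrightarrow> \<not> (t ! j = q \<and> t ! Suc j = p)"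
  shows "\<exists>r \<le> length t. t = replicate r p @ replicate (length t - r) q"
  using assms(2,3)
proof (induction t)
  case Nil then show ?case by simp
next
  case (Cons x t)
  have h1: "\<forall>x\<in>set t. x = p \<or> x = q" using Cons.prems by simp
  have h2: "\<forall>j. Suc j < length t \<longrightarrow> \<not> (t ! j = q \<and> t ! Suc j = p)"
  proof (intro allI impI)
    fix j assume "Suc j < length t"
    then show "\<not> (t ! j = q \<and> t ! Suc j = p)" using Cons.prems(2)[rule_format, of "Suc j"] by simp
  qed
  obtain r where r: "r \<le> length t" "t = replicate r p @ replicate (length t - r) q"
    using Cons.IH[OF h1 h2] by blast
  show ?case
  proof (cases "x = p")
    case True
    then show ?thesis using r by (intro exI[of _ "Suc r"]) simp
  next
    case False
    then have xq: "x = q" using Cons.prems by simp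
    have r0: "r = 0"
    proof (rule ccontr)
      assume "r \<noteq> 0"
      then obtain r' where r': "r = Suc r'" by (cases r) auto
      have "t ! 0 = p" using r(2) r' by (metis Cons_eq_appendI nth_Cons_0 replicate_Suc)
      moreover have "0 < length t" using r(1) r' by linarith
      ultimately have "t ! 0 = p" "0 < length t" by simp_all
      then show False using Cons.prems(2)[rule_format, of 0] xq by simp
    qed
    then show ?thesis using r xq by (intro exI[of _ 0]) simp
  qed
qed


definition okp :: "(nat \<Rightarrow> bool) \<Rightarrow> nat \<Rightarrow> nat \<Rightarrow> nat \<Rightarrow> bool" where
  "okp asc s x y \<longleftrightarrow> x \<le> y \<and> (asc s \<longrightarrow> x < y \<or> (x = y \<and> even x)) \<and> (\<not> asc s \<longrightarrow> x < y \<or> (x = y \<and> odd x))"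

definition Tb :: "(nat \<Rightarrow> bool) \<Rightarrow> nat \<Rightarrow> nat \<Rightarrow> nat \<Rightarrow> nat list set" where
  "Tb asc s0 v L = {t. length t = L \<and> (\<forall>x\<in>set t. zabs x = v) \<and> (\<forall>j. Suc j < L \<longrightarrow> okp asc (s0 + j) (t ! j) (t ! Suc j))}"

definition mk :: "nat \<Rightarrow> nat \<Rightarrow> nat \<Rightarrow> nat list" where
  "mk v L r = replicate r (2 * v - 1) @ replicate (L - r) (2 * v)"

lemma zabs_v: "0 < v \<Longrightarrow> zabs x = v \<longleftrightarrow> x = 2 * v - 1 \<or> x = 2 * v"
  unfolding zabs_def by presburger

lemma okp_two:
  assumes v: "0 < v" and x: "x = 2 * v - 1 \<or> x = 2 * v" and y: "y = 2 * v - 1 \<or> y = 2 * v"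
  shows "okp asc s x y \<longleftrightarrow> \<not> (x = 2 * v \<and> y = 2 * v - 1) \<and> (x = 2 * v - 1 \<and> y = 2 * v - 1 \<longrightarrow> \<not> asc s)
      \<and> (x = 2 * v \<and> y = 2 * v \<longrightarrow> asc s)"
proof -
  have o: "odd (2 * v - 1)" using v by presburger
  have e: "even (2 * v)" by simp
  have ne: "2 * v - 1 < 2 * v" using v by simp
  show ?thesis using x y o e ne unfolding okp_def by auto
qed

lemma mk_nth: "r \<le> L \<Longrightarrow> j < L \<Longrightarrow> mk v L r ! j = (if j < r then 2 * v - 1 else 2 * v)"
  unfolding mk_def by (simp add: nth_append)

lemma mk_len: "length (mk v L r) = L" if "r \<le> L" using that unfolding mk_def by simp

lemma mk_ok:
  assumes v: "0 < v" and r: "r \<le> L"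
  shows "(\<forall>j. Suc j < L \<longrightarrow> okp asc (s0 + j) (mk v L r ! j) (mk v L r ! Suc j)) \<longleftrightarrow> PcL (\<lambda>j. asc (s0 + j)) L r"
proof -
  have ne: "2 * v - 1 \<noteq> 2 * v" using v by simp
  have "\<And>j. Suc j < L \<Longrightarrow> okp asc (s0 + j) (mk v L r ! j) (mk v L r ! Suc j) \<longleftrightarrow>
       (Suc j < r \<longrightarrow> \<not> asc (s0 + j)) \<and> (r \<le> j \<longrightarrow> asc (s0 + j))"
  proof -
    fix j assume j: "Suc j < L"
    have a: "mk v L r ! j = (if j < r then 2 * v - 1 else 2 * v)" using mk_nth[OF r] j by simp
    have b: "mk v L r ! Suc j = (if Suc j < r then 2 * v - 1 else 2 * v)" using mk_nth[OF r j] .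
    show "okp asc (s0 + j) (mk v L r ! j) (mk v L r ! Suc j) \<longleftrightarrow>
       (Suc j < r \<longrightarrow> \<not> asc (s0 + j)) \<and> (r \<le> j \<longrightarrow> asc (s0 + j))"
      unfolding a b using okp_two[OF v, of "if j < r then 2 * v - 1 else 2 * v" "if Suc j < r then 2 * v - 1 else 2 * v" asc "s0 + j"] ne
      by (auto split: if_splits)
  qed
  note H = this
  show ?thesis
  proof
    assume A: "\<forall>j. Suc j < L \<longrightarrow> okp asc (s0 + j) (mk v L r ! j) (mk v L r ! Suc j)"
    show "PcL (\<lambda>j. asc (s0 + j)) L r" unfolding PcL_def
    proof (intro conjI allI impI)
      fix j assume j: "Suc j < r"
      then have "Suc j < L" using r by simp
      then show "\<not> asc (s0 + j)" using A H j by blast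
    next
      fix j assume j: "r \<le> j" "Suc j < L"
      then show "asc (s0 + j)" using A H by blast
    qed
  next
    assume B: "PcL (\<lambda>j. asc (s0 + j)) L r"
    show "\<forall>j. Suc j < L \<longrightarrow> okp asc (s0 + j) (mk v L r ! j) (mk v L r ! Suc j)"
    proof (intro allI impI)
      fix j assume j: "Suc j < L"
      have "(Suc j < r \<longrightarrow> \<not> asc (s0 + j)) \<and> (r \<le> j \<longrightarrow> asc (s0 + j))"
        using B j unfolding PcL_def by blast
      then show "okp asc (s0 + j) (mk v L r ! j) (mk v L r ! Suc j)" using H j by blast
    qed
  qed
qed

lemma Tb_card:
  assumes v: "0 < v" and L: "1 \<le> L"
  shows "card (Tb asc s0 v L) = (if WL (\<lambda>j. asc (s0 + j)) L then 2 else 0)"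
proof -
  let ?R = "{r. r \<le> L \<and> PcL (\<lambda>j. asc (s0 + j)) L r}"
  have ne: "2 * v - 1 \<noteq> 2 * v" using v by simp
  have img: "Tb asc s0 v L = mk v L ` ?R"
  proof (intro set_eqI iffI)
    fix t assume t: "t \<in> Tb asc s0 v L"
    then have lt: "length t = L" and vals: "\<forall>x\<in>set t. x = 2 * v - 1 \<or> x = 2 * v"
      and okt: "\<forall>j. Suc j < L \<longrightarrow> okp asc (s0 + j) (t ! j) (t ! Suc j)"
      unfolding Tb_def using zabs_v[OF v] by auto
    have noinv: "\<forall>j. Suc j < length t \<longrightarrow> \<not> (t ! j = 2 * v \<and> t ! Suc j = 2 * v - 1)"
    proof (intro allI impI)
      fix j assume j: "Suc j < length t"
      have "t ! j \<in> set t" "t ! Suc j \<in> set t" using j by auto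
      then have "t ! j = 2 * v - 1 \<or> t ! j = 2 * v" "t ! Suc j = 2 * v - 1 \<or> t ! Suc j = 2 * v" using vals by auto
      then show "\<not> (t ! j = 2 * v \<and> t ! Suc j = 2 * v - 1)" using okt j lt okp_two[OF v] by blast
    qed
    obtain r where r: "r \<le> length t" "t = replicate r (2 * v - 1) @ replicate (length t - r) (2 * v)"
      using two_val_form[OF ne vals noinv] by blast
    have tm: "t = mk v L r" using r lt unfolding mk_def by simp
    have "PcL (\<lambda>j. asc (s0 + j)) L r" using mk_ok[OF v, of r L asc s0] okt tm r lt by simp
    then have "r \<in> ?R" using r lt by simp
    then show "t \<in> mk v L ` ?R" unfolding tm by (rule imageI)
  next
    fix t assume "t \<in> mk v L ` ?R"
    then obtain r where r: "r \<le> L" "PcL (\<lambda>j. asc (s0 + j)) L r" and tm: "t = mk v L r" by auto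
    have "set t \<subseteq> {2 * v - 1, 2 * v}" unfolding tm mk_def by auto
    then have "\<forall>x\<in>set t. zabs x = v" using zabs_v[OF v] by blast
    then show "t \<in> Tb asc s0 v L" unfolding Tb_def using mk_ok[OF v r(1), of asc s0] r tm mk_len[OF r(1)] by simp
  qed
  have inj: "inj_on (mk v L) ?R"
  proof (rule inj_onI)
    fix r r' assume "r \<in> ?R" "r' \<in> ?R" and e: "mk v L r = mk v L r'"
    have "\<And>r. r \<le> L \<Longrightarrow> length (filter (\<lambda>x. x = 2 * v - 1) (mk v L r)) = r"
      unfolding mk_def using ne by simp
    then show "r = r'" using e \<open>r \<in> ?R\<close> \<open>r' \<in> ?R\<close> by (metis (no_types, lifting) mem_Collect_eq)
  qed
  show ?thesis unfolding img card_image[OF inj] using cut_count[OF L] by simp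
qed

definition Avalid :: "(nat \<Rightarrow> bool) \<Rightarrow> nat list \<Rightarrow> bool" where
  "Avalid asc a \<longleftrightarrow> (\<forall>s<length a. okp asc s ((0 # a) ! s) ((0 # a) ! Suc s))"

definition AS :: "(nat \<Rightarrow> bool) \<Rightarrow> nat list \<Rightarrow> nat list set" where
  "AS asc c = {a. map zabs a = c \<and> Avalid asc a}"

definition PeA :: "(nat \<Rightarrow> bool) \<Rightarrow> nat \<Rightarrow> nat set" where
  "PeA asc k = {i. 1 \<le> i \<and> i < k \<and> asc (i - 1) \<and> \<not> asc i}"

definition condL :: "(nat \<Rightarrow> bool) \<Rightarrow> nat list \<Rightarrow> bool" where
  "condL asc c \<longleftrightarrow> (\<forall>i\<in>PeA asc (length c). i - 1 \<in> Tset (length c) c \<or> i \<in> Tset (length c) c)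
      \<and> (\<not> asc 0 \<and> c \<noteq> [] \<longrightarrow> 0 \<in> Tset (length c) c)"

lemma b_nth1: "s \<le> length a \<Longrightarrow> (0 # a @ t) ! s = (0 # a) ! s"
  by (cases s) (auto simp: nth_append)

lemma b_nth2: "(0 # a @ t) ! (Suc (length a) + j) = t ! j"
  by (simp add: nth_append)

lemma Avalid_append:
  assumes k: "length a = k"
  shows "Avalid asc (a @ t) \<longleftrightarrow> Avalid asc a \<and> (t \<noteq> [] \<longrightarrow> okp asc k ((0 # a) ! k) (t ! 0))
     \<and> (\<forall>j. Suc j < length t \<longrightarrow> okp asc (Suc k + j) (t ! j) (t ! Suc j))"
proof -
  have b1: "\<And>s. s \<le> k \<Longrightarrow> (0 # a @ t) ! s = (0 # a) ! s" using b_nth1 k by blast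
  have b2: "\<And>j. (0 # a @ t) ! (Suc k + j) = t ! j" using b_nth2[of a t] k by blast
  show ?thesis
  proof
    assume A: "Avalid asc (a @ t)"
    have "Avalid asc a" unfolding Avalid_def
    proof (intro allI impI)
      fix s assume s: "s < length a"
      then have "okp asc s ((0 # a @ t) ! s) ((0 # a @ t) ! Suc s)" using A unfolding Avalid_def by simp
      then show "okp asc s ((0 # a) ! s) ((0 # a) ! Suc s)" using b1[of s] b1[of "Suc s"] s k by simp
    qed
    moreover have "t \<noteq> [] \<longrightarrow> okp asc k ((0 # a) ! k) (t ! 0)"
    proof
      assume "t \<noteq> []"
      then have "k < length (a @ t)" using k by simp
      then have "okp asc k ((0 # a @ t) ! k) ((0 # a @ t) ! Suc k)" using A unfolding Avalid_def by blast
      then show "okp asc k ((0 # a) ! k) (t ! 0)" using b1[of k] b2[of 0] by simp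
    qed
    moreover have "\<forall>j. Suc j < length t \<longrightarrow> okp asc (Suc k + j) (t ! j) (t ! Suc j)"
    proof (intro allI impI)
      fix j assume j: "Suc j < length t"
      then have "Suc k + j < length (a @ t)" using k by simp
      then have "okp asc (Suc k + j) ((0 # a @ t) ! (Suc k + j)) ((0 # a @ t) ! Suc (Suc k + j))"
        using A unfolding Avalid_def by blast
      then show "okp asc (Suc k + j) (t ! j) (t ! Suc j)" using b2[of j] b2[of "Suc j"] by simp
    qed
    ultimately show "Avalid asc a \<and> (t \<noteq> [] \<longrightarrow> okp asc k ((0 # a) ! k) (t ! 0))
     \<and> (\<forall>j. Suc j < length t \<longrightarrow> okp asc (Suc k + j) (t ! j) (t ! Suc j))" by blast
  next
    assume B: "Avalid asc a \<and> (t \<noteq> [] \<longrightarrow> okp asc k ((0 # a) ! k) (t ! 0))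
     \<and> (\<forall>j. Suc j < length t \<longrightarrow> okp asc (Suc k + j) (t ! j) (t ! Suc j))"
    show "Avalid asc (a @ t)" unfolding Avalid_def
    proof (intro allI impI)
      fix s assume s: "s < length (a @ t)"
      show "okp asc s ((0 # a @ t) ! s) ((0 # a @ t) ! Suc s)"
      proof (cases "s < k")
        case True
        then have "okp asc s ((0 # a) ! s) ((0 # a) ! Suc s)" using B k unfolding Avalid_def by blast
        then show ?thesis using b1[of s] b1[of "Suc s"] True by simp
      next
        case False
        show ?thesis
        proof (cases "s = k")
          case True
          then have "t \<noteq> []" using s k by auto
          then have "okp asc k ((0 # a) ! k) (t ! 0)" using B by blast
          then show ?thesis using b1[of k] b2[of 0] True by simp
        next
          case False2: False
          define j where "j = s - Suc k"
          have sj: "s = Suc k + j" using False False2 unfolding j_def by simp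
          have "Suc j < length t" using s sj k by simp
          then have "okp asc (Suc k + j) (t ! j) (t ! Suc j)" using B by blast
          then show ?thesis using b2[of j] b2[of "Suc j"] sj by simp
        qed
      qed
    qed
  qed
qed


lemma Tset_sub: "Tset k c \<subseteq> {..<k}" unfolding Tset_def by auto

lemma Tset_block:
  assumes cv: "\<forall>x\<in>set cp. x < v" and v: "0 < v" and L: "1 \<le> L" and k: "length cp = k"
  shows "Tset (k + L) (cp @ replicate L v) = insert k (Tset k cp)"
proof -
  let ?b = "0 # cp @ replicate L v"
  have B1: "\<And>s. s \<le> k \<Longrightarrow> ?b ! s = (0 # cp) ! s" using b_nth1 k by blast
  have B2: "\<And>j. j < L \<Longrightarrow> ?b ! (Suc k + j) = v" using b_nth2[of cp "replicate L v"] k by simp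
  have C: "(0 # cp) ! k < v"
  proof (cases k)
    case 0 then show ?thesis using v by simp
  next
    case (Suc k') then have "cp ! k' \<in> set cp" using k by simp
    then show ?thesis using cv Suc by simp
  qed
  show ?thesis
  proof (intro set_eqI iffI)
    fix s assume s: "s \<in> Tset (k + L) (cp @ replicate L v)"
    then have sl: "s < k + L" and lt: "?b ! s < ?b ! Suc s" unfolding Tset_def by auto
    show "s \<in> insert k (Tset k cp)"
    proof (cases "s < k")
      case True
      then have "(0 # cp) ! s < (0 # cp) ! Suc s" using lt B1[of s] B1[of "Suc s"] by simp
      then show ?thesis using True unfolding Tset_def by simp
    next
      case False
      show ?thesis
      proof (cases "s = k")
        case True then show ?thesis by simp
      next
        case False2: False
        define j where "j = s - Suc k"
        have sj: "s = Suc k + j" "Suc j < L" using False False2 sl unfolding j_def by auto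
        have "?b ! s = v" using B2[of j] sj by simp
        moreover have "?b ! Suc s = v" using B2[of "Suc j"] sj by simp
        ultimately show ?thesis using lt by simp
      qed
    qed
  next
    fix s assume s: "s \<in> insert k (Tset k cp)"
    show "s \<in> Tset (k + L) (cp @ replicate L v)"
    proof (cases "s = k")
      case True
      have "?b ! k < ?b ! Suc k" using B1[of k] B2[of 0] C L by simp
      then show ?thesis using True L unfolding Tset_def by simp
    next
      case False
      then have sT: "s \<in> Tset k cp" using s by simp
      then have sk: "s < k" "(0 # cp) ! s < (0 # cp) ! Suc s" unfolding Tset_def by auto
      then have "?b ! s < ?b ! Suc s" using B1[of s] B1[of "Suc s"] by simp
      then show ?thesis using sk unfolding Tset_def by simp
    qed
  qed
qed

lemma condL_block:
  assumes cv: "\<forall>x\<in>set cp. x < v" and v: "0 < v" and L: "1 \<le> L" and k: "length cp = k"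
  shows "condL asc (cp @ replicate L v) \<longleftrightarrow> condL asc cp \<and> WL (\<lambda>j. asc (Suc k + j)) L"
proof -
  let ?T = "Tset (k + L) (cp @ replicate L v)"
  let ?T' = "Tset k cp"
  have T: "?T = insert k ?T'" by (rule Tset_block[OF cv v L k])
  have T'k: "\<And>x. x \<in> ?T' \<Longrightarrow> x < k" using Tset_sub by blast
  have len: "length (cp @ replicate L v) = k + L" using k by simp
  have P1: "(\<forall>i\<in>PeA asc (k + L). i - 1 \<in> ?T \<or> i \<in> ?T) \<longleftrightarrow>
        (\<forall>i\<in>PeA asc k. i - 1 \<in> ?T' \<or> i \<in> ?T') \<and> WL (\<lambda>j. asc (Suc k + j)) L"
  proof
    assume A: "\<forall>i\<in>PeA asc (k + L). i - 1 \<in> ?T \<or> i \<in> ?T"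
    have "\<forall>i\<in>PeA asc k. i - 1 \<in> ?T' \<or> i \<in> ?T'"
    proof
      fix i assume i: "i \<in> PeA asc k"
      then have "i \<in> PeA asc (k + L)" "i < k" unfolding PeA_def by auto
      then show "i - 1 \<in> ?T' \<or> i \<in> ?T'" using A T by auto
    qed
    moreover have "WL (\<lambda>j. asc (Suc k + j)) L" unfolding WL_def
    proof (intro allI impI notI)
      fix i assume i: "0 < i" "Suc i < L" and pk: "asc (Suc k + (i - 1)) \<and> \<not> asc (Suc k + i)"
      have "Suc k + i \<in> PeA asc (k + L)" unfolding PeA_def using i pk by auto
      then have "Suc k + i - 1 \<in> ?T \<or> Suc k + i \<in> ?T" using A by blast
      then show False using T T'k[of "Suc (k + i)"] T'k[of "Suc k + i - 1"] i by auto
    qed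
    ultimately show "(\<forall>i\<in>PeA asc k. i - 1 \<in> ?T' \<or> i \<in> ?T') \<and> WL (\<lambda>j. asc (Suc k + j)) L" by blast
  next
    assume B: "(\<forall>i\<in>PeA asc k. i - 1 \<in> ?T' \<or> i \<in> ?T') \<and> WL (\<lambda>j. asc (Suc k + j)) L"
    show "\<forall>i\<in>PeA asc (k + L). i - 1 \<in> ?T \<or> i \<in> ?T"
    proof
      fix i assume i: "i \<in> PeA asc (k + L)"
      then have i1: "1 \<le> i" "i < k + L" "asc (i - 1)" "\<not> asc i" unfolding PeA_def by auto
      show "i - 1 \<in> ?T \<or> i \<in> ?T"
      proof (cases "i < k")
        case True
        then have "i \<in> PeA asc k" using i1 unfolding PeA_def by simp
        then show ?thesis using B T by auto
      next
        case False
        show ?thesis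
        proof (cases "i \<le> Suc k")
          case True
          then have "i = k \<or> i - 1 = k" using False by auto
          then show ?thesis using T by auto
        next
          case False2: False
          define j where "j = i - Suc k"
          have j: "0 < j" "Suc j < L" "i = Suc k + j" using False2 i1 unfolding j_def by auto
          have "\<not> (asc (Suc k + (j - 1)) \<and> \<not> asc (Suc k + j))" using B j unfolding WL_def by blast
          moreover have "Suc k + (j - 1) = i - 1" using j by simp
          ultimately show ?thesis using i1 j by simp
        qed
      qed
    qed
  qed
  have P2: "(\<not> asc 0 \<and> cp @ replicate L v \<noteq> [] \<longrightarrow> 0 \<in> ?T) \<longleftrightarrow> (\<not> asc 0 \<and> cp \<noteq> [] \<longrightarrow> 0 \<in> ?T')"
  proof (cases k)
    case 0
    then show ?thesis using T k by simp
  next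
    case (Suc k')
    have a: "0 \<in> ?T \<longleftrightarrow> 0 \<in> ?T'" using T Suc by simp
    have b: "cp \<noteq> []" using k Suc by auto
    show ?thesis using a b by simp
  qed
  have c: "condL asc (cp @ replicate L v) \<longleftrightarrow> (\<forall>i\<in>PeA asc (k + L). i - 1 \<in> ?T \<or> i \<in> ?T) \<and>
     (\<not> asc 0 \<and> cp @ replicate L v \<noteq> [] \<longrightarrow> 0 \<in> ?T)" unfolding condL_def len ..
  have c': "condL asc cp \<longleftrightarrow> (\<forall>i\<in>PeA asc k. i - 1 \<in> ?T' \<or> i \<in> ?T') \<and>
     (\<not> asc 0 \<and> cp \<noteq> [] \<longrightarrow> 0 \<in> ?T')" unfolding condL_def k ..
  show ?thesis using c c' P1 P2 by blast
qed

lemma map_zabs_zero: "map zabs a = replicate L 0 \<longleftrightarrow> a = replicate L 0"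
proof (induction a arbitrary: L)
  case Nil then show ?case by (cases L) auto
next
  case (Cons x a)
  have z: "zabs x = 0 \<longleftrightarrow> x = 0" unfolding zabs_def by presburger
  show ?case using Cons z by (cases L) auto
qed

lemma zero_block:
  assumes L: "1 \<le> L"
  shows "card (AS asc (replicate L 0)) = (if condL asc (replicate L 0) then 2 ^ card (Tset (length (replicate L 0)) (replicate L 0)) else 0)"
proof -
  have b0: "\<And>s. s \<le> L \<Longrightarrow> (0 # replicate L (0::nat)) ! s = 0"
    by (metis Cons_replicate_eq le_imp_less_Suc nth_replicate replicate_Suc)
  have T: "Tset L (replicate L 0) = {}" unfolding Tset_def using b0 by auto
  have T2: "Tset (length (replicate L (0::nat))) (replicate L 0) = {}" using T by simp
  have ok0: "\<And>s. okp asc s 0 0 \<longleftrightarrow> asc s" unfolding okp_def by simp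
  have Av: "Avalid asc (replicate L 0) \<longleftrightarrow> (\<forall>s<L. asc s)"
    unfolding Avalid_def using b0 ok0 by simp
  have AS: "AS asc (replicate L 0) = (if \<forall>s<L. asc s then {replicate L 0} else {})"
    unfolding AS_def map_zabs_zero using Av by auto
  have cnd: "condL asc (replicate L 0) \<longleftrightarrow> (\<forall>s<L. asc s)"
  proof
    assume c: "condL asc (replicate L 0)"
    then have pe: "PeA asc L = {}" and a0: "asc 0" unfolding condL_def T2 using L by auto
    show "\<forall>s<L. asc s"
    proof (intro allI impI)
      fix s assume "s < L"
      then show "asc s"
      proof (induction s)
        case 0 then show ?case using a0 by simp
      next
        case (Suc s)
        then have "asc s" by simp
        moreover have "Suc s \<notin> PeA asc L" using pe by simp
        ultimately show ?case using Suc.prems unfolding PeA_def by simp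
      qed
    qed
  next
    assume a: "\<forall>s<L. asc s"
    then have "PeA asc L = {}" unfolding PeA_def by auto
    then show "condL asc (replicate L 0)" unfolding condL_def T2 using a L by simp
  qed
  show ?thesis unfolding AS cnd using T by simp
qed

lemma sorted_le_last: "sorted c \<Longrightarrow> x \<in> set c \<Longrightarrow> x \<le> last c"
proof -
  assume s: "sorted c" and x: "x \<in> set c"
  then obtain i where i: "i < length c" "c ! i = x" by (metis in_set_conv_nth)
  have "c \<noteq> []" using x by auto
  then have "last c = c ! (length c - 1)" by (simp add: last_conv_nth)
  moreover have "c ! i \<le> c ! (length c - 1)" using s i by (intro sorted_nth_mono) auto
  ultimately show ?thesis using i by simp
qed

lemma zabs_lt_okp: "zabs x < v \<Longrightarrow> zabs y = v \<Longrightarrow> okp asc s x y"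
proof -
  assume "zabs x < v" "zabs y = v"
  then have "x < y" unfolding zabs_def by presburger
  then show ?thesis unfolding okp_def by simp
qed

lemma AS_block:
  assumes cv: "\<forall>x\<in>set cp. x < v" and v: "0 < v" and L: "1 \<le> L" and k: "length cp = k"
  shows "card (AS asc (cp @ replicate L v)) = card (AS asc cp) * card (Tb asc (Suc k) v L)"
proof -
  let ?f = "\<lambda>p. fst p @ snd p"
  have img: "AS asc (cp @ replicate L v) = ?f ` (AS asc cp \<times> Tb asc (Suc k) v L)"
  proof (intro set_eqI iffI)
    fix a assume a: "a \<in> AS asc (cp @ replicate L v)"
    then have m: "map zabs a = cp @ replicate L v" and av: "Avalid asc a" unfolding AS_def by auto
    obtain us vs where uv: "a = us @ vs" "cp = map zabs us" "replicate L v = map zabs vs"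
      using m by (metis map_eq_append_conv)
    have lu: "length us = k" using uv k by simp
    have lv: "length vs = L" using uv by (metis length_map length_replicate)
    have A: "Avalid asc us \<and> (vs \<noteq> [] \<longrightarrow> okp asc k ((0 # us) ! k) (vs ! 0))
     \<and> (\<forall>j. Suc j < length vs \<longrightarrow> okp asc (Suc k + j) (vs ! j) (vs ! Suc j))"
      using av Avalid_append[OF lu, of asc vs] uv by simp
    have "us \<in> AS asc cp" using A uv unfolding AS_def by simp
    moreover have "vs \<in> Tb asc (Suc k) v L"
    proof -
      have "\<forall>x\<in>set vs. zabs x = v"
      proof
        fix x assume "x \<in> set vs"
        then have "zabs x \<in> set (map zabs vs)" by simp
        then show "zabs x = v" using uv(3) by (metis in_set_replicate)
      qed
      then show ?thesis unfolding Tb_def using A lv by simp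
    qed
    ultimately show "a \<in> ?f ` (AS asc cp \<times> Tb asc (Suc k) v L)" using uv
      by (metis (no_types, lifting) fst_conv snd_conv mem_Sigma_iff image_eqI)
  next
    fix a assume "a \<in> ?f ` (AS asc cp \<times> Tb asc (Suc k) v L)"
    then obtain us vs where a: "a = us @ vs" and u: "us \<in> AS asc cp" and w: "vs \<in> Tb asc (Suc k) v L"
      by auto
    have mu: "map zabs us = cp" and au: "Avalid asc us" using u unfolding AS_def by auto
    have lv: "length vs = L" and zv: "\<forall>x\<in>set vs. zabs x = v"
      and iv: "\<forall>j. Suc j < L \<longrightarrow> okp asc (Suc k + j) (vs ! j) (vs ! Suc j)"
      using w unfolding Tb_def by auto
    have lu: "length us = k" using mu k by auto
    have mv: "map zabs vs = replicate L v"
    proof -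
      have "\<forall>y\<in>set (map zabs vs). y = v" using zv by simp
      then have "replicate (length (map zabs vs)) v = map zabs vs" by (rule replicate_length_same)
      then show ?thesis using lv by simp
    qed
    have junc: "vs \<noteq> [] \<longrightarrow> okp asc k ((0 # us) ! k) (vs ! 0)"
    proof
      assume ne: "vs \<noteq> []"
      have z0: "zabs (vs ! 0) = v" using zv ne by simp
      have "zabs ((0 # us) ! k) < v"
      proof (cases k)
        case 0 then show ?thesis using v by (simp add: zabs_def)
      next
        case (Suc k')
        then have "(0 # us) ! k = us ! k'" by simp
        moreover have "zabs (us ! k') = cp ! k'" using mu Suc lu by auto
        moreover have "cp ! k' \<in> set cp" using Suc k by simp
        ultimately show ?thesis using cv by simp
      qed
      then show "okp asc k ((0 # us) ! k) (vs ! 0)" using z0 zabs_lt_okp by blast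
    qed
    have "Avalid asc (us @ vs)" using Avalid_append[OF lu, of asc vs] au junc iv lv by simp
    then show "a \<in> AS asc (cp @ replicate L v)" unfolding AS_def using a mu mv by simp
  qed
  have inj: "inj_on ?f (AS asc cp \<times> Tb asc (Suc k) v L)"
  proof (rule inj_onI)
    fix p q assume p: "p \<in> AS asc cp \<times> Tb asc (Suc k) v L" and q: "q \<in> AS asc cp \<times> Tb asc (Suc k) v L"
      and e: "fst p @ snd p = fst q @ snd q"
    have "map zabs (fst p) = cp" "map zabs (fst q) = cp" using p q unfolding AS_def by auto
    then have "length (fst p) = length (fst q)" by (metis length_map)
    then have "fst p = fst q \<and> snd p = snd q" using e by simp
    then show "p = q" by (simp add: prod_eq_iff)
  qed
  show ?thesis unfolding img card_image[OF inj] card_cartesian_product ..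
qed

theorem LHS_count:
  "sorted c \<Longrightarrow> card (AS asc c) = (if condL asc c then 2 ^ card (Tset (length c) c) else 0)"
proof (induction "length c" arbitrary: c rule: less_induct)
  case less
  show ?case
  proof (cases "c = []")
    case True
    have "AS asc [] = {[]}" unfolding AS_def Avalid_def by auto
    moreover have "condL asc []" unfolding condL_def PeA_def by simp
    moreover have "Tset 0 [] = {}" unfolding Tset_def by simp
    ultimately show ?thesis using True by simp
  next
    case ne: False
    define v where "v = last c"
    show ?thesis
    proof (cases "v = 0")
      case True
      have "\<forall>y\<in>set c. y = 0" using sorted_le_last[OF less.prems] True unfolding v_def by fastforce
      define L where "L = length c"
      have c0: "c = replicate L 0" unfolding L_def using \<open>\<forall>y\<in>set c. y = 0\<close> by (metis replicate_length_same)
      have "1 \<le> L" using ne unfolding L_def by (cases c) auto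
      from zero_block[OF this, of asc] show ?thesis unfolding c0 .
    next
      case False
      then have v0: "0 < v" by simp
      define cp where "cp = takeWhile (\<lambda>x. x < v) c"
      define d where "d = dropWhile (\<lambda>x. x < v) c"
      have cd: "c = cp @ d" unfolding cp_def d_def by simp
      have cpv: "\<forall>x\<in>set cp. x < v" unfolding cp_def by (auto dest: set_takeWhileD)
      have dne: "d \<noteq> []"
      proof
        assume "d = []"
        then have "c = cp" using cd by simp
        moreover have "v \<in> set c" using ne unfolding v_def by simp
        ultimately show False using cpv by auto
      qed
      have sd: "sorted d" and scp: "sorted cp" using less.prems cd by (metis sorted_append)+
      have hd: "\<not> hd d < v" using dne unfolding d_def by (rule hd_dropWhile)
      have dv: "\<forall>y\<in>set d. y = v"
      proof
        fix y assume y: "y \<in> set d"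
        have "hd d \<le> y"
        proof -
          have "d = hd d # tl d" using dne by simp
          then show ?thesis using sd y by (metis set_ConsD sorted_simps(2) order_refl)
        qed
        moreover have "y \<le> v" using sorted_le_last[OF less.prems, of y] y cd unfolding v_def by simp
        ultimately show "y = v" using hd by simp
      qed
      define L where "L = length d"
      have dL: "d = replicate L v" unfolding L_def using dv by (metis replicate_length_same)
      have L1: "1 \<le> L" using dne unfolding L_def by (cases d) auto
      define k where "k = length cp"
      have kl: "k < length c" using cd dne unfolding k_def by simp
      have c2: "c = cp @ replicate L v" using cd dL by simp
      have IH: "card (AS asc cp) = (if condL asc cp then 2 ^ card (Tset k cp) else 0)"
        using less.hyps[OF kl[unfolded k_def] scp] unfolding k_def .
      have Tb: "card (Tb asc (Suc k) v L) = (if WL (\<lambda>j. asc (Suc k + j)) L then 2 else 0)"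
        using Tb_card[OF v0 L1] .
      have AS: "card (AS asc c) = card (AS asc cp) * card (Tb asc (Suc k) v L)"
        unfolding c2 using AS_block[OF cpv v0 L1 k_def[symmetric]] .
      have lc: "length c = k + L" using c2 unfolding k_def by simp
      have T: "Tset (k + L) c = insert k (Tset k cp)"
        unfolding c2 using Tset_block[OF cpv v0 L1 k_def[symmetric]] .
      have kn: "k \<notin> Tset k cp" using Tset_sub by blast
      have fT: "finite (Tset k cp)" using Tset_sub finite_subset by blast
      have cT: "card (Tset (length c) c) = Suc (card (Tset k cp))" unfolding lc T using kn fT by simp
      have cL: "condL asc c \<longleftrightarrow> condL asc cp \<and> WL (\<lambda>j. asc (Suc k + j)) L"
        unfolding c2 using condL_block[OF cpv v0 L1 k_def[symmetric]] .
      show ?thesis unfolding AS IH Tb cT cL by simp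
    qed
  qed
qed

lemma Avalid_sorted: "Avalid asc a \<Longrightarrow> sorted a"
  unfolding sorted_iff_nth_Suc
proof (intro allI impI)
  fix i assume A: "Avalid asc a" and i: "Suc i < length a"
  then have "okp asc (Suc i) ((0 # a) ! Suc i) ((0 # a) ! Suc (Suc i))" unfolding Avalid_def by blast
  then show "a ! i \<le> a ! Suc i" unfolding okp_def by simp
qed

lemma zabs_mono: "x \<le> y \<Longrightarrow> zabs x \<le> zabs y"
  unfolding zabs_def by (simp add: div_le_mono)

lemma sorted_map_zabs: "sorted a \<Longrightarrow> sorted (map zabs a)"
  unfolding sorted_iff_nth_Suc using zabs_mono by simp

theorem main_thm:
  fixes n :: nat and \<pi> :: "int \<Rightarrow> int"
  assumes "1 \<le> n" and "signed_perm n \<pi>"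
  shows "\<forall>M :: monomial. dB_coef n \<pi> M =
     2 ^ (peB n \<pi> + varsigma \<pi>) *
     (\<Sum>D \<in> {D. D \<subseteq> {0..<n} \<and> PeB n \<pi> \<subseteq> symdiff D (Suc ` D)
                 \<and> (\<pi> 1 < 0 \<longrightarrow> 0 \<in> D)}. L_coef n D M)"
proof
  fix M :: monomial
  have n1: "1 \<le> n" using assms(1) .
  have bij: "bij_betw \<pi> {- int n..int n} {- int n..int n}" and odd: "\<And>i. \<pi> (- i) = - \<pi> i"
    using assms(2) unfolding signed_perm_def by auto
  have p0: "\<pi> 0 = 0" using odd[of 0] by simp
  have inj: "inj_on \<pi> {- int n..int n}" using bij by (rule bij_betw_imp_inj_on)
  define asc where "asc = (\<lambda>s::nat. \<pi> (int s) < \<pi> (int s + 1))"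
  have ne: "\<And>s. s < n \<Longrightarrow> \<pi> (int s) \<noteq> \<pi> (int s + 1)"
  proof
    fix s assume s: "s < n" and e: "\<pi> (int s) = \<pi> (int s + 1)"
    have "int s \<in> {- int n..int n}" "int s + 1 \<in> {- int n..int n}" using s by auto
    then have "int s = int s + 1" using inj e by (meson inj_on_contraD)
    then show False by simp
  qed
  have nasc: "\<And>s. s < n \<Longrightarrow> \<not> asc s \<longleftrightarrow> \<pi> (int s) > \<pi> (int s + 1)"
    unfolding asc_def using ne by (meson linorder_neqE_linordered_idom not_less_iff_gr_or_eq)
  have pi1: "\<pi> 1 < 0 \<longleftrightarrow> \<not> asc 0" using nasc[of 0] n1 p0 by simp
  have dB: "dB_seqs n \<pi> = {a. length a = n \<and> Avalid asc a}"
  proof (intro set_eqI)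
    fix a :: "nat list"
    show "a \<in> dB_seqs n \<pi> \<longleftrightarrow> a \<in> {a. length a = n \<and> Avalid asc a}"
    proof (cases "length a = n")
      case True
      have "\<And>s. s < n \<Longrightarrow> okp asc s ((0 # a) ! s) ((0 # a) ! Suc s) \<longleftrightarrow>
          ((0 # a) ! s \<le> (0 # a) ! (s + 1)) \<and>
          (\<pi> (int s) < \<pi> (int s + 1) \<longrightarrow> ((0 # a) ! s < (0 # a) ! (s+1) \<or> ((0 # a) ! s = (0 # a) ! (s+1) \<and> plus_type ((0 # a) ! s)))) \<and>
          (\<pi> (int s) > \<pi> (int s + 1) \<longrightarrow> ((0 # a) ! s < (0 # a) ! (s+1) \<or> ((0 # a) ! s = (0 # a) ! (s+1) \<and> minus_type ((0 # a) ! s))))"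
        unfolding okp_def plus_type_def minus_type_def using nasc asc_def by simp
      then show ?thesis unfolding dB_seqs_def Avalid_def Let_def using True by auto
    next
      case False then show ?thesis unfolding dB_seqs_def by simp
    qed
  qed
  define P where "P = PeA asc n"
  have PeB: "PeB n \<pi> = P"
  proof (intro set_eqI iffI)
    fix i assume "i \<in> PeB n \<pi>"
    then have i: "1 \<le> i" "i \<le> n - 1" "\<pi> (int i - 1) < \<pi> (int i)" "\<pi> (int i) > \<pi> (int i + 1)"
      unfolding PeB_def by auto
    have il: "i < n" using i n1 by simp
    have "int (i - 1) = int i - 1" "int (i - 1) + 1 = int i" using i by auto
    then have "asc (i - 1)" using i unfolding asc_def by simp
    moreover have "\<not> asc i" using nasc[OF il] i by simp
    ultimately show "i \<in> P" unfolding P_def PeA_def using i il by simp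
  next
    fix i assume "i \<in> P"
    then have i: "1 \<le> i" "i < n" "asc (i - 1)" "\<not> asc i" unfolding P_def PeA_def by auto
    have "int (i - 1) = int i - 1" "int (i - 1) + 1 = int i" using i by auto
    then have "\<pi> (int i - 1) < \<pi> (int i)" using i unfolding asc_def by simp
    moreover have "\<pi> (int i) > \<pi> (int i + 1)" using nasc[OF i(2)] i by simp
    ultimately show "i \<in> PeB n \<pi>" unfolding PeB_def using i by simp
  qed
  define z where "z = (\<not> asc 0)"
  have vs: "varsigma \<pi> = (if z then 1 else 0)" unfolding varsigma_def z_def using pi1 by simp
  have pe: "peB n \<pi> = card P" unfolding peB_def PeB ..
  have P1: "\<forall>i\<in>P. 1 \<le> i" unfolding P_def PeA_def by auto
  have finP: "finite P" unfolding P_def PeA_def by auto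
  have Pna: "\<forall>i\<in>P. \<forall>j\<in>P. i \<noteq> Suc j" unfolding P_def PeA_def by auto
  have z1: "z \<longrightarrow> 1 \<notin> P" unfolding z_def P_def PeA_def by auto
  let ?DD = "{D. D \<subseteq> {0..<n} \<and> PeB n \<pi> \<subseteq> symdiff D (Suc ` D) \<and> (\<pi> 1 < 0 \<longrightarrow> 0 \<in> D)}"
  have finDD: "finite ?DD" by (rule finite_subset[of _ "Pow {0..<n}"]) auto
  have symd: "\<And>D. PeB n \<pi> \<subseteq> symdiff D (Suc ` D) \<longleftrightarrow> (\<forall>i\<in>P. (i \<in> D) \<noteq> (i - 1 \<in> D))"
  proof -
    fix D :: "nat set"
    have "\<And>i. 1 \<le> i \<Longrightarrow> i \<in> Suc ` D \<longleftrightarrow> i - 1 \<in> D"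
      by (metis Suc_diff_1 diff_Suc_1 image_iff less_eq_Suc_le zero_less_Suc One_nat_def)
    then show "PeB n \<pi> \<subseteq> symdiff D (Suc ` D) \<longleftrightarrow> (\<forall>i\<in>P. (i \<in> D) \<noteq> (i - 1 \<in> D))"
      unfolding PeB symdiff_def using P1 by auto
  qed
  show "dB_coef n \<pi> M = 2 ^ (peB n \<pi> + varsigma \<pi>) * (\<Sum>D \<in> ?DD. L_coef n D M)"
  proof (cases "size M = n")
    case False
    have e: "{a \<in> dB_seqs n \<pi>. mset (map zabs a) = M} = {}" using False unfolding dB by auto
    have l: "dB_coef n \<pi> M = 0" unfolding dB_coef_def e by simp
    have "\<And>D. L_coef n D M = 0" unfolding L_coef_def using N_coef_size False by simp
    then show ?thesis using l by simp
  next
    case True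
    define c where "c = sorted_list_of_multiset M"
    have Mc: "M = mset c" unfolding c_def by simp
    have sc: "sorted c" unfolding c_def by simp
    have lc: "length c = n" using True Mc by (metis size_mset)
    define T where "T = Tset n c"
    have Tn: "T \<subseteq> {0..<n}" unfolding T_def Tset_def by auto
    have finT: "finite T" using Tn finite_subset by blast
    have "{a \<in> dB_seqs n \<pi>. mset (map zabs a) = M} = AS asc c"
    proof (intro set_eqI iffI)
      fix a assume "a \<in> {a \<in> dB_seqs n \<pi>. mset (map zabs a) = M}"
      then have a: "length a = n" "Avalid asc a" "mset (map zabs a) = mset c" unfolding dB Mc by auto
      have "map zabs a = c" using sorted_mset_eq[OF sorted_map_zabs[OF Avalid_sorted[OF a(2)]] sc a(3)] .
      then show "a \<in> AS asc c" unfolding AS_def using a by simp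
    next
      fix a assume "a \<in> AS asc c"
      then have "map zabs a = c" "Avalid asc a" unfolding AS_def by auto
      moreover then have "length a = n" using lc by (metis length_map)
      ultimately show "a \<in> {a \<in> dB_seqs n \<pi>. mset (map zabs a) = M}" unfolding dB Mc by (metis (mono_tags, lifting) mem_Collect_eq)
    qed
    then have lhs: "dB_coef n \<pi> M = (if condL asc c then 2 ^ card T else 0)"
      unfolding dB_coef_def T_def using LHS_count[OF sc, of asc] lc by simp
    have Lc: "\<And>D. L_coef n D M = (if D \<subseteq> T then 1 else 0)"
    proof -
      fix D :: "nat set"
      have fin: "finite {T. D \<subseteq> T \<and> T \<subseteq> {0..<n}}" by (rule finite_subset[of _ "Pow {0..<n}"]) auto
      have "L_coef n D M = (\<Sum>T' \<in> {T. D \<subseteq> T \<and> T \<subseteq> {0..<n}}. if T = T' then 1 else 0)"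
        unfolding L_coef_def Mc T_def using N_coef_eq[OF _ sc lc] by (intro sum.cong) auto
      also have "\<dots> = (if T \<in> {T. D \<subseteq> T \<and> T \<subseteq> {0..<n}} then 1 else 0)"
        using sum.delta'[OF fin, of T "\<lambda>_. 1"] by simp
      finally show "L_coef n D M = (if D \<subseteq> T then 1 else 0)" using Tn by simp
    qed
    have "(\<Sum>D \<in> ?DD. L_coef n D M) = (\<Sum>D \<in> ?DD. if D \<subseteq> T then 1 else 0)"
      using Lc by simp
    also have "\<dots> = card {D \<in> ?DD. D \<subseteq> T}"
    proof -
      have "card {D \<in> ?DD. D \<subseteq> T} = (\<Sum>D\<in>{D \<in> ?DD. D \<subseteq> T}. 1)" by (rule card_eq_sum)
      also have "\<dots> = (\<Sum>D \<in> ?DD. if D \<subseteq> T then 1 else 0)" by (rule sum.inter_filter[OF finDD])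
      finally show ?thesis by simp
    qed
    also have "{D \<in> ?DD. D \<subseteq> T} = {D. D \<subseteq> T \<and> (\<forall>i\<in>P. (i \<in> D) \<noteq> (i - 1 \<in> D)) \<and> (z \<longrightarrow> 0 \<in> D)}"
      using Tn symd pi1 unfolding z_def by blast
    finally have rs: "(\<Sum>D \<in> ?DD. L_coef n D M) = card {D. D \<subseteq> T \<and> (\<forall>i\<in>P. (i \<in> D) \<noteq> (i - 1 \<in> D)) \<and> (z \<longrightarrow> 0 \<in> D)}" .
    have cnd: "condL asc c \<longleftrightarrow> (\<forall>i\<in>P. i - 1 \<in> T \<or> i \<in> T) \<and> (z \<longrightarrow> 0 \<in> T)"
    proof -
      have "c \<noteq> []" using lc n1 by auto
      then show ?thesis unfolding condL_def lc P_def T_def z_def by simp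
    qed
    show ?thesis unfolding lhs rs pe vs cnd using rhs_count[OF finT finP P1 Pna z1] by simp
  qed
qed

theorem theorem6p6:
  fixes n :: nat and \<pi> :: "int \<Rightarrow> int"
  assumes "1 \<le> n" and "signed_perm n \<pi>"
  shows "\<forall>M :: monomial. dB_coef n \<pi> M =
     2 ^ (peB n \<pi> + varsigma \<pi>) *
     (\<Sum>D \<in> {D. D \<subseteq> {0..<n} \<and> PeB n \<pi> \<subseteq> symdiff D (Suc ` D)
                 \<and> (\<pi> 1 < 0 \<longrightarrow> 0 \<in> D)}. L_coef n D M)"
  using assms by (rule main_thm)

end
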